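(* Let $Y^{(\infty)}$ and $Y^{*(\infty)}$ be independent sequences, both with joint distribution $P_\theta$ for the same true $\theta\in\Theta$. Let $\hat\Theta_{1-\varepsilon}(Y^{(n)})$ be Robbins' regions built with weight function $\pi$ and $\hat\Theta^*_{1-\varepsilon}(Y^{*(n')})$ Robbins' regions built with a possibly different strictly positive weight function $\pi^*$, with the same $\varepsilon\in(0,1)$. Then $$P_\theta\big(\theta\in\hat\Theta_{1-\varepsilon}(Y^{(n)})\cap\hat\Theta^*_{1-\varepsilon}(Y^{*(n')})\text{ for every }n,n'\ge1\big)\ge(1-\varepsilon)^2,$$ and in particular, for all $n,n'\ge1$, $P_\theta\big(\hat\Theta_{1-\varepsilon}(Y^{(n)})\cap\hat\Theta^*_{1-\varepsilon}(Y^{*(n')})\neq\emptyset\big)\ge(1-\varepsilon)^2$.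
   Context: The joint distribution $P_\theta$ of a sequence $(Y_1,Y_2,\ldots)$, $\theta\in\Theta\subseteq\mathbb{R}^p$, is such that $Y^{(n)}=(Y_1,\ldots,Y_n)$ has density $p_n(y^{(n)};\theta)$, strictly positive on a support not depending on $\theta$, forming a consistent family in $n$. For a strictly positive probability density $\pi$ on $\Theta$, $q_n(y^{(n)})=\int_\Theta p_n(y^{(n)};\theta)\pi(\theta)d\theta$ and Robbins' region is $\hat\Theta_{1-\varepsilon}(y^{(n)})=\{\theta\in\Theta:p_n(y^{(n)};\theta)\ge\varepsilon q_n(y^{(n)})\}$; $\hat\Theta^*$ is defined in the same way with $\pi^*$ in place of $\pi$. *)

theory Defs
  imports "HOL-Probability.Probability"
begin

definition robbins_mix ::
  "('y \<Rightarrow> 'b::euclidean_space \<Rightarrow> real) \<Rightarrow> ('b \<Rightarrow> real) \<Rightarrow> 'b set \<Rightarrow> 'y \<Rightarrow> ennreal" where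
  "robbins_mix pn w \<Theta> y = (\<integral>\<^sup>+ t\<in>\<Theta>. ennreal (pn y t * w t) \<partial>lborel)"

definition robbins_region ::
  "('y \<Rightarrow> 'b::euclidean_space \<Rightarrow> real) \<Rightarrow> ('b \<Rightarrow> real) \<Rightarrow> 'b set \<Rightarrow> real \<Rightarrow> 'y \<Rightarrow> 'b set" where
  "robbins_region pn w \<Theta> \<epsilon> y =
     {t \<in> \<Theta>. ennreal \<epsilon> * robbins_mix pn w \<Theta> y \<le> ennreal (pn y t)}"

end

theory Submission imports Defs begin

lemma ville:
  fixes M :: "'a measure" and \<Theta> :: "'b::euclidean_space set"
    and p :: "nat \<Rightarrow> (nat \<Rightarrow> 'a) \<Rightarrow> 'b \<Rightarrow> real"
    and P :: "'b \<Rightarrow> (nat \<Rightarrow> 'a) measure"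
    and v :: "'b \<Rightarrow> real" and \<epsilon> :: real and \<theta> :: 'b
  assumes M: "sigma_finite_measure M"
    and Theta_meas: "\<Theta> \<in> sets lborel"
    and p_meas: "\<And>n. (\<lambda>(y, t). p n y t) \<in> borel_measurable (PiM {..<n} (\<lambda>_. M) \<Otimes>\<^sub>M lborel)"
    and p_nonneg: "\<And>n y t. y \<in> space (PiM {..<n} (\<lambda>_. M)) \<Longrightarrow> t \<in> \<Theta> \<Longrightarrow> 0 \<le> p n y t"
    and P_prob: "\<And>t. t \<in> \<Theta> \<Longrightarrow> prob_space (P t)"
    and P_sets: "\<And>t. t \<in> \<Theta> \<Longrightarrow> sets (P t) = sets (PiM UNIV (\<lambda>_::nat. M))"
    and P_marg: "\<And>t n. t \<in> \<Theta> \<Longrightarrow> n \<ge> 1 \<Longrightarrow>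
        distr (P t) (PiM {..<n} (\<lambda>_. M)) (\<lambda>\<omega>. restrict \<omega> {..<n})
          = density (PiM {..<n} (\<lambda>_. M)) (\<lambda>y. ennreal (p n y t))"
    and v_meas: "v \<in> borel_measurable lborel"
    and v_pos: "\<And>t. t \<in> \<Theta> \<Longrightarrow> 0 < v t"
    and v_int: "(\<integral>\<^sup>+ t\<in>\<Theta>. ennreal (v t) \<partial>lborel) = 1"
    and eps: "0 < \<epsilon>" "\<epsilon> < 1"
    and theta: "\<theta> \<in> \<Theta>"
  shows "{\<omega> \<in> space (P \<theta>). \<forall>n\<ge>1. \<theta> \<in> robbins_region (p n) v \<Theta> \<epsilon> (restrict \<omega> {..<n})} \<in> sets (P \<theta>)
     \<and> 1 - \<epsilon> \<le> measure (P \<theta>) {\<omega> \<in> space (P \<theta>). \<forall>n\<ge>1. \<theta> \<in> robbins_region (p n) v \<Theta> \<epsilon> (restrict \<omega> {..<n})}"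
proof -
  define S where "S = PiM (UNIV::nat set) (\<lambda>_. M)"
  define Mn where "Mn (n::nat) = PiM {..<n} (\<lambda>_. M)" for n
  interpret PS: product_sigma_finite "\<lambda>_::nat. M" using M by (simp add: product_sigma_finite_def)
  have sfMn: "sigma_finite_measure (Mn n)" for n
    unfolding Mn_def by (rule product_sigma_finite.sigma_finite) (use M in \<open>auto simp add: product_sigma_finite_def\<close>)
  have pm[measurable]: "(\<lambda>x. p n (fst x) (snd x)) \<in> borel_measurable (Mn n \<Otimes>\<^sub>M lborel)" for n
    using p_meas[of n] by (simp add: Mn_def case_prod_beta')
  note [measurable] = v_meas Theta_meas
  have pt[measurable]: "(\<lambda>y. p n y t) \<in> borel_measurable (Mn n)" for n t
    using measurable_compose[OF measurable_Pair2'[of t lborel "Mn n"] pm[of n]] by simp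
  define q where "q n y = robbins_mix (p n) v \<Theta> y" for n y
  have q_meas[measurable]: "q n \<in> borel_measurable (Mn n)" for n
  proof -
    have "(\<lambda>(y,t). ennreal (p n y t * v t) * indicator \<Theta> t) \<in> borel_measurable (Mn n \<Otimes>\<^sub>M lborel)"
      by measurable
    then have "(\<lambda>y. \<integral>\<^sup>+ t. ennreal (p n y t * v t) * indicator \<Theta> t \<partial>lborel) \<in> borel_measurable (Mn n)"
      by (rule lborel.borel_measurable_nn_integral)
    then show ?thesis unfolding q_def robbins_mix_def by (simp add: fun_eq_iff)
  qed
  define bad where "bad n = {y \<in> space (Mn n). ennreal (p n y \<theta>) < ennreal \<epsilon> * q n y}" for n
  have bad_sets[measurable]: "bad n \<in> sets (Mn n)" for n
    unfolding bad_def by measurable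
  have rm[measurable]: "(\<lambda>y. restrict y {..<k}) \<in> measurable (Mn n) (Mn k)" if "k \<le> n" for k n
    unfolding Mn_def using that by (intro measurable_restrict_subset) auto
  have rs: "restrict y {..<k} \<in> space (Mn k)" if "y \<in> space (Mn n)" "k \<le> n" for y k n
    using measurable_space[OF rm[OF that(2)] that(1)] .
  define D where "D n = {y \<in> space (Mn n). 1 \<le> n \<and> y \<in> bad n \<and> (\<forall>k\<in>{1..<n}. restrict y {..<k} \<notin> bad k)}" for n
  have D_sets: "D n \<in> sets (Mn n)" for n
  proof -
    have "D n = (if 1 \<le> n then bad n \<inter> (\<Inter>k\<in>{1..<n}. (\<lambda>y. restrict y {..<k}) -` (space (Mn k) - bad k) \<inter> space (Mn n)) else {})"
      using sets.sets_into_space[OF bad_sets[of n]]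
      apply (auto simp: D_def) using rs less_imp_le by blast
    also have "\<dots> \<in> sets (Mn n)"
      by (auto intro!: sets.Int sets.finite_INT measurable_sets[OF rm] sets.Diff)
    finally show ?thesis .
  qed
  have sp: "space (P t) = space S" if "t \<in> \<Theta>" for t
    using sets_eq_imp_space_eq[OF P_sets[OF that]] by (simp add: S_def)
  have rS: "(\<lambda>\<omega>. restrict \<omega> {..<n}) \<in> measurable S (Mn n)" for n
    unfolding S_def Mn_def by (rule measurable_restrict_subset) simp
  have rP: "(\<lambda>\<omega>. restrict \<omega> {..<n}) \<in> measurable (P t) (Mn n)" if "t \<in> \<Theta>" for t n
    using rS[of n] measurable_cong_sets[OF P_sets[OF that] refl, of "Mn n"] by (simp add: S_def)
  define F where "F n = (\<lambda>\<omega>. restrict \<omega> {..<n}) -` D n \<inter> space S" for n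
  have F_sets: "F n \<in> sets (P t)" if "t \<in> \<Theta>" for t n
    using measurable_sets[OF rP[OF that] D_sets[of n]] by (simp add: F_def sp[OF that])
  have F_em: "emeasure (P t) (F n) = (\<integral>\<^sup>+ y. ennreal (p n y t) * indicator (D n) y \<partial>Mn n)"
    if t: "t \<in> \<Theta>" for t n
  proof (cases "1 \<le> n")
    case True
    have "emeasure (P t) (F n) = emeasure (distr (P t) (Mn n) (\<lambda>\<omega>. restrict \<omega> {..<n})) (D n)"
      by (simp add: emeasure_distr[OF rP[OF t] D_sets] F_def sp[OF t])
    also have "\<dots> = emeasure (density (Mn n) (\<lambda>y. ennreal (p n y t))) (D n)"
      using P_marg[OF t True] by (simp add: Mn_def)
    also have "\<dots> = (\<integral>\<^sup>+ y. ennreal (p n y t) * indicator (D n) y \<partial>Mn n)"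
      by (rule emeasure_density) (use D_sets in measurable)
    finally show ?thesis .
  next
    case False
    then have "D n = {}" by (simp add: D_def)
    then show ?thesis by (simp add: F_def)
  qed
  have disj: "disjoint_family F"
  proof -
    have *: "F m \<inter> F n = {}" if "m < n" for m n
    proof -
      { fix \<omega> assume a: "\<omega> \<in> F m" "\<omega> \<in> F n"
        then have "restrict \<omega> {..<m} \<in> bad m" "1 \<le> m" by (auto simp: F_def D_def)
        moreover have "restrict (restrict \<omega> {..<n}) {..<m} = restrict \<omega> {..<m}"
          using that by (auto simp: restrict_def fun_eq_iff)
        moreover have "\<forall>k\<in>{1..<n}. restrict (restrict \<omega> {..<n}) {..<k} \<notin> bad k"
          using a(2) by (auto simp: F_def D_def simp del: restrict_restrict)
        ultimately have False using that by (metis atLeastLessThan_iff) }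
      then show ?thesis by blast
    qed
    show ?thesis unfolding disjoint_family_on_def
      by (metis * inf_commute linorder_neqE_nat)
  qed
  have region: "\<theta> \<in> robbins_region (p n) v \<Theta> \<epsilon> (restrict \<omega> {..<n}) \<longleftrightarrow> restrict \<omega> {..<n} \<notin> bad n"
    if "\<omega> \<in> space S" for \<omega> n
    using theta measurable_space[OF rS that]
    by (auto simp: robbins_region_def bad_def q_def not_less)
  define B where "B = {\<omega> \<in> space S. \<exists>n\<ge>1. restrict \<omega> {..<n} \<in> bad n}"
  have BF: "B = (\<Union>n. F n)"
  proof
    show "B \<subseteq> (\<Union>n. F n)"
    proof
      fix \<omega> assume "\<omega> \<in> B"
      then have \<omega>: "\<omega> \<in> space S" and ex: "\<exists>n. 1 \<le> n \<and> restrict \<omega> {..<n} \<in> bad n" by (auto simp: B_def)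
      define n0 where "n0 = (LEAST n. 1 \<le> n \<and> restrict \<omega> {..<n} \<in> bad n)"
      have n0: "1 \<le> n0" "restrict \<omega> {..<n0} \<in> bad n0"
        using LeastI_ex[OF ex] by (auto simp: n0_def)
      have lt: "restrict \<omega> {..<k} \<notin> bad k" if "k \<in> {1..<n0}" for k
        using not_less_Least[of k "\<lambda>n. 1 \<le> n \<and> restrict \<omega> {..<n} \<in> bad n"] that
        by (auto simp: n0_def)
      have "restrict (restrict \<omega> {..<n0}) {..<k} = restrict \<omega> {..<k}" if "k \<in> {1..<n0}" for k
        using that by (auto simp: restrict_def fun_eq_iff)
      then have "\<omega> \<in> F n0"
        using n0 lt \<omega> measurable_space[OF rS \<omega>, of n0]
        by (auto simp: F_def D_def simp del: restrict_restrict)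
      then show "\<omega> \<in> (\<Union>n. F n)" by blast
    qed
    show "(\<Union>n. F n) \<subseteq> B" by (auto simp: B_def F_def D_def)
  qed
  have E_eq: "{\<omega> \<in> space (P \<theta>). \<forall>n\<ge>1. \<theta> \<in> robbins_region (p n) v \<Theta> \<epsilon> (restrict \<omega> {..<n})} = space (P \<theta>) - B"
    using region sp[OF theta] by (auto simp: B_def)
  have B_sets: "B \<in> sets (P \<theta>)"
    unfolding BF using F_sets[OF theta] by auto
  have bound: "emeasure (P \<theta>) B \<le> ennreal \<epsilon>"
  proof -
    define g where "g n t = (\<integral>\<^sup>+ y. ennreal (p n y t) * indicator (D n) y \<partial>Mn n)" for n t
    have pm2[measurable]: "(\<lambda>x. p n (snd x) (fst x)) \<in> borel_measurable (lborel \<Otimes>\<^sub>M Mn n)" for n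
      using measurable_compose[OF measurable_pair_swap' pm[of n]] by (simp add: case_prod_beta')
    note [measurable] = D_sets
    have g_meas[measurable]: "g n \<in> borel_measurable lborel" for n
    proof -
      have "(\<lambda>(t,y). ennreal (p n y t) * indicator (D n) y) \<in> borel_measurable (lborel \<Otimes>\<^sub>M Mn n)"
        by measurable
      then show ?thesis unfolding g_def
        by (rule sigma_finite_measure.borel_measurable_nn_integral[OF sfMn])
    qed
    have pl: "(\<lambda>t. p n y t) \<in> borel_measurable lborel" if "y \<in> space (Mn n)" for n y
      using measurable_compose[OF measurable_Pair1'[OF that, of lborel] pm[of n]] by simp
    have psf: "pair_sigma_finite (Mn n) lborel" for n
      unfolding pair_sigma_finite_def using sfMn sigma_finite_lborel by simp
    have key: "(\<integral>\<^sup>+ y. ennreal \<epsilon> * q n y * indicator (D n) y \<partial>Mn n)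
        = ennreal \<epsilon> * (\<integral>\<^sup>+ t. ennreal (v t) * indicator \<Theta> t * g n t \<partial>lborel)" for n
    proof -
      have "(\<integral>\<^sup>+ y. ennreal \<epsilon> * q n y * indicator (D n) y \<partial>Mn n)
          = (\<integral>\<^sup>+ y. (\<integral>\<^sup>+ t. (ennreal \<epsilon> * indicator (D n) y) * (ennreal (p n y t * v t) * indicator \<Theta> t) \<partial>lborel) \<partial>Mn n)"
      proof (rule nn_integral_cong)
        fix y assume y: "y \<in> space (Mn n)"
        have "(\<lambda>t. ennreal (p n y t * v t) * indicator \<Theta> t) \<in> borel_measurable lborel"
          using pl[OF y] by measurable
        then show "ennreal \<epsilon> * q n y * indicator (D n) y
          = (\<integral>\<^sup>+ t. (ennreal \<epsilon> * indicator (D n) y) * (ennreal (p n y t * v t) * indicator \<Theta> t) \<partial>lborel)"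
          by (subst nn_integral_cmult) (simp_all add: q_def robbins_mix_def mult.commute mult.left_commute mult.assoc[symmetric])
      qed
      also have "\<dots> = (\<integral>\<^sup>+ t. (\<integral>\<^sup>+ y. (ennreal \<epsilon> * indicator (D n) y) * (ennreal (p n y t * v t) * indicator \<Theta> t) \<partial>Mn n) \<partial>lborel)"
        by (rule pair_sigma_finite.Fubini'[OF psf, symmetric]) measurable
      also have "\<dots> = (\<integral>\<^sup>+ t. ennreal \<epsilon> * (ennreal (v t) * indicator \<Theta> t * g n t) \<partial>lborel)"
      proof (rule nn_integral_cong)
        fix t :: 'b
        show "(\<integral>\<^sup>+ y. (ennreal \<epsilon> * indicator (D n) y) * (ennreal (p n y t * v t) * indicator \<Theta> t) \<partial>Mn n)
            = ennreal \<epsilon> * (ennreal (v t) * indicator \<Theta> t * g n t)"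
        proof (cases "t \<in> \<Theta>")
          case True
          have "(\<integral>\<^sup>+ y. (ennreal \<epsilon> * indicator (D n) y) * (ennreal (p n y t * v t) * indicator \<Theta> t) \<partial>Mn n)
              = (\<integral>\<^sup>+ y. (ennreal \<epsilon> * ennreal (v t)) * (ennreal (p n y t) * indicator (D n) y) \<partial>Mn n)"
            using True p_nonneg v_pos[OF True]
            by (intro nn_integral_cong) (simp add: ennreal_mult Mn_def ac_simps)
          also have "\<dots> = (ennreal \<epsilon> * ennreal (v t)) * g n t"
            unfolding g_def by (rule nn_integral_cmult) measurable
          finally show ?thesis using True by (simp add: ac_simps)
        next
          case False then show ?thesis by simp
        qed
      qed
      also have "\<dots> = ennreal \<epsilon> * (\<integral>\<^sup>+ t. ennreal (v t) * indicator \<Theta> t * g n t \<partial>lborel)"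
        by (rule nn_integral_cmult) measurable
      finally show ?thesis .
    qed
    have gsum: "(\<Sum>n. g n t) \<le> 1" if t: "t \<in> \<Theta>" for t
    proof -
      interpret Pt': prob_space "P t" using P_prob[OF t] .
      have "(\<Sum>n. g n t) = (\<Sum>n. emeasure (P t) (F n))"
        using F_em[OF t] by (simp add: g_def)
      also have "\<dots> = emeasure (P t) (\<Union>n. F n)"
        by (rule suminf_emeasure) (use F_sets[OF t] disj in auto)
      also have "\<dots> \<le> 1" by (rule Pt'.emeasure_le_1)
      finally show ?thesis .
    qed
    have "emeasure (P \<theta>) B = (\<Sum>n. emeasure (P \<theta>) (F n))"
      unfolding BF by (rule suminf_emeasure[symmetric]) (use F_sets[OF theta] disj in auto)
    also have "\<dots> = (\<Sum>n. g n \<theta>)"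
      using F_em[OF theta] by (simp add: g_def)
    also have "\<dots> \<le> (\<Sum>n. (\<integral>\<^sup>+ y. ennreal \<epsilon> * q n y * indicator (D n) y \<partial>Mn n))"
    proof (rule suminf_le[OF _ summableI summableI])
      fix n
      show "g n \<theta> \<le> (\<integral>\<^sup>+ y. ennreal \<epsilon> * q n y * indicator (D n) y \<partial>Mn n)"
        unfolding g_def
      proof (rule nn_integral_mono)
        fix y assume "y \<in> space (Mn n)"
        show "ennreal (p n y \<theta>) * indicator (D n) y \<le> ennreal \<epsilon> * q n y * indicator (D n) y"
          by (cases "y \<in> D n") (auto simp: D_def bad_def less_imp_le)
      qed
    qed
    also have "\<dots> = (\<Sum>n. ennreal \<epsilon> * (\<integral>\<^sup>+ t. ennreal (v t) * indicator \<Theta> t * g n t \<partial>lborel))"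
      by (simp add: key)
    also have "\<dots> = ennreal \<epsilon> * (\<Sum>n. (\<integral>\<^sup>+ t. ennreal (v t) * indicator \<Theta> t * g n t \<partial>lborel))"
      by simp
    also have "\<dots> = ennreal \<epsilon> * (\<integral>\<^sup>+ t. (\<Sum>n. ennreal (v t) * indicator \<Theta> t * g n t) \<partial>lborel)"
      by (subst nn_integral_suminf) (auto)
    also have "\<dots> \<le> ennreal \<epsilon> * (\<integral>\<^sup>+ t. ennreal (v t) * indicator \<Theta> t \<partial>lborel)"
    proof (intro mult_left_mono nn_integral_mono)
      fix t :: 'b
      show "(\<Sum>n. ennreal (v t) * indicator \<Theta> t * g n t) \<le> ennreal (v t) * indicator \<Theta> t"
      proof (cases "t \<in> \<Theta>")
        case True
        then have "(\<Sum>n. ennreal (v t) * indicator \<Theta> t * g n t) = ennreal (v t) * (\<Sum>n. g n t)"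
          by simp
        also have "\<dots> \<le> ennreal (v t) * 1" by (intro mult_left_mono gsum True) simp
        finally show ?thesis using True by simp
      qed simp
    qed simp
    also have "\<dots> = ennreal \<epsilon>" using v_int by simp
    finally show ?thesis .
  qed
  interpret Pt: prob_space "P \<theta>" using P_prob[OF theta] .
  have "measure (P \<theta>) B \<le> \<epsilon>"
    using bound eps by (simp add: Pt.emeasure_eq_measure)
  then show ?thesis
    using Pt.prob_compl[OF B_sets] B_sets unfolding E_eq by auto
qed
lemma aux: "(\<forall>n\<ge>(1::nat). \<forall>n'\<ge>(1::nat). X n \<and> Y n') \<longleftrightarrow> (\<forall>n\<ge>1. X n) \<and> (\<forall>n\<ge>1. Y n)"
  by (metis order_refl)

theorem mainTheorem10:
  fixes M :: "'a measure"
    and \<Theta> :: "'b::euclidean_space set"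
    and p :: "nat \<Rightarrow> (nat \<Rightarrow> 'a) \<Rightarrow> 'b \<Rightarrow> real"
    and P :: "'b \<Rightarrow> (nat \<Rightarrow> 'a) measure"
    and w ws :: "'b \<Rightarrow> real"
    and \<epsilon> :: real
    and \<theta> :: 'b
  assumes M: "sigma_finite_measure M"
    and Theta_meas: "\<Theta> \<in> sets lborel"
    and p_meas: "\<And>n. (\<lambda>(y, t). p n y t) \<in> borel_measurable (PiM {..<n} (\<lambda>_. M) \<Otimes>\<^sub>M lborel)"
    and p_nonneg: "\<And>n y t. y \<in> space (PiM {..<n} (\<lambda>_. M)) \<Longrightarrow> t \<in> \<Theta> \<Longrightarrow> 0 \<le> p n y t"
    and support: "\<And>n. n \<ge> 1 \<Longrightarrow> \<exists>S. \<forall>t\<in>\<Theta>. \<forall>y\<in>space (PiM {..<n} (\<lambda>_. M)).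
                      (0 < p n y t \<longleftrightarrow> y \<in> S)"
    and P_prob: "\<And>t. t \<in> \<Theta> \<Longrightarrow> prob_space (P t)"
    and P_sets: "\<And>t. t \<in> \<Theta> \<Longrightarrow> sets (P t) = sets (PiM UNIV (\<lambda>_::nat. M))"
    and P_marg: "\<And>t n. t \<in> \<Theta> \<Longrightarrow> n \<ge> 1 \<Longrightarrow>
        distr (P t) (PiM {..<n} (\<lambda>_. M)) (\<lambda>\<omega>. restrict \<omega> {..<n})
          = density (PiM {..<n} (\<lambda>_. M)) (\<lambda>y. ennreal (p n y t))"
    and w_meas: "w \<in> borel_measurable lborel"
    and w_pos: "\<And>t. t \<in> \<Theta> \<Longrightarrow> 0 < w t"
    and w_int: "(\<integral>\<^sup>+ t\<in>\<Theta>. ennreal (w t) \<partial>lborel) = 1"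
    and ws_meas: "ws \<in> borel_measurable lborel"
    and ws_pos: "\<And>t. t \<in> \<Theta> \<Longrightarrow> 0 < ws t"
    and ws_int: "(\<integral>\<^sup>+ t\<in>\<Theta>. ennreal (ws t) \<partial>lborel) = 1"
    and eps: "0 < \<epsilon>" "\<epsilon> < 1"
    and theta: "\<theta> \<in> \<Theta>"
  shows "(1 - \<epsilon>)^2 \<le> measure (P \<theta> \<Otimes>\<^sub>M P \<theta>)
           {\<omega> \<in> space (P \<theta> \<Otimes>\<^sub>M P \<theta>). \<forall>n\<ge>1. \<forall>n'\<ge>1.
              \<theta> \<in> robbins_region (p n) w \<Theta> \<epsilon> (restrict (fst \<omega>) {..<n})
                  \<inter> robbins_region (p n') ws \<Theta> \<epsilon> (restrict (snd \<omega>) {..<n'})}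
         \<and> (\<forall>n\<ge>1. \<forall>n'\<ge>1. \<exists>A \<in> sets (P \<theta> \<Otimes>\<^sub>M P \<theta>).
           A \<subseteq> {\<omega> \<in> space (P \<theta> \<Otimes>\<^sub>M P \<theta>).
                  robbins_region (p n) w \<Theta> \<epsilon> (restrict (fst \<omega>) {..<n})
                  \<inter> robbins_region (p n') ws \<Theta> \<epsilon> (restrict (snd \<omega>) {..<n'}) \<noteq> {}}
           \<and> (1 - \<epsilon>)^2 \<le> measure (P \<theta> \<Otimes>\<^sub>M P \<theta>) A)"
proof -
  define E1 where "E1 = {\<omega> \<in> space (P \<theta>). \<forall>n\<ge>1. \<theta> \<in> robbins_region (p n) w \<Theta> \<epsilon> (restrict \<omega> {..<n})}"
  define E2 where "E2 = {\<omega> \<in> space (P \<theta>). \<forall>n\<ge>1. \<theta> \<in> robbins_region (p n) ws \<Theta> \<epsilon> (restrict \<omega> {..<n})}"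
  have V1: "E1 \<in> sets (P \<theta>)" "1 - \<epsilon> \<le> measure (P \<theta>) E1"
    using ville[OF M Theta_meas p_meas p_nonneg P_prob P_sets P_marg w_meas w_pos w_int eps theta]
    unfolding E1_def by blast+
  have V2: "E2 \<in> sets (P \<theta>)" "1 - \<epsilon> \<le> measure (P \<theta>) E2"
    using ville[OF M Theta_meas p_meas p_nonneg P_prob P_sets P_marg ws_meas ws_pos ws_int eps theta]
    unfolding E2_def by blast+
  interpret Pt: prob_space "P \<theta>" using P_prob[OF theta] .
  interpret PP: pair_prob_space "P \<theta>" "P \<theta>" by unfold_locales
  have seteq: "{\<omega> \<in> space (P \<theta> \<Otimes>\<^sub>M P \<theta>). \<forall>n\<ge>1. \<forall>n'\<ge>1.
              \<theta> \<in> robbins_region (p n) w \<Theta> \<epsilon> (restrict (fst \<omega>) {..<n})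
                  \<inter> robbins_region (p n') ws \<Theta> \<epsilon> (restrict (snd \<omega>) {..<n'})} = E1 \<times> E2"
    unfolding E1_def E2_def space_pair_measure Int_iff aux by auto
  have "emeasure (P \<theta> \<Otimes>\<^sub>M P \<theta>) (E1 \<times> E2) = emeasure (P \<theta>) E1 * emeasure (P \<theta>) E2"
    by (rule Pt.emeasure_pair_measure_Times[OF V1(1) V2(1)])
  then have "ennreal (measure (P \<theta> \<Otimes>\<^sub>M P \<theta>) (E1 \<times> E2)) = ennreal (measure (P \<theta>) E1 * measure (P \<theta>) E2)"
    by (simp add: PP.P.emeasure_eq_measure Pt.emeasure_eq_measure ennreal_mult)
  then have mt: "measure (P \<theta> \<Otimes>\<^sub>M P \<theta>) (E1 \<times> E2) = measure (P \<theta>) E1 * measure (P \<theta>) E2"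
    by (simp add: ennreal_inj)
  have ge: "(1 - \<epsilon>)^2 \<le> measure (P \<theta> \<Otimes>\<^sub>M P \<theta>) (E1 \<times> E2)"
    unfolding mt power2_eq_square using V1(2) V2(2) eps by (intro mult_mono) auto
  have Es: "E1 \<times> E2 \<in> sets (P \<theta> \<Otimes>\<^sub>M P \<theta>)" using V1(1) V2(1) by auto
  have sub: "E1 \<times> E2 \<subseteq> {\<omega> \<in> space (P \<theta> \<Otimes>\<^sub>M P \<theta>).
                  robbins_region (p n) w \<Theta> \<epsilon> (restrict (fst \<omega>) {..<n})
                  \<inter> robbins_region (p n') ws \<Theta> \<epsilon> (restrict (snd \<omega>) {..<n'}) \<noteq> {}}"
    if "n \<ge> 1" "n' \<ge> 1" for n n'
  proof
    fix x assume x: "x \<in> E1 \<times> E2"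
    then have x1: "fst x \<in> E1" and x2: "snd x \<in> E2" by (auto simp only: mem_Times_iff)
    have "\<theta> \<in> robbins_region (p n) w \<Theta> \<epsilon> (restrict (fst x) {..<n})"
      using x1 that(1) unfolding E1_def by blast
    moreover have "\<theta> \<in> robbins_region (p n') ws \<Theta> \<epsilon> (restrict (snd x) {..<n'})"
      using x2 that(2) unfolding E2_def by blast
    moreover have "x \<in> space (P \<theta> \<Otimes>\<^sub>M P \<theta>)"
      using x1 x2 unfolding E1_def E2_def space_pair_measure by (simp add: mem_Times_iff)
    ultimately show "x \<in> {\<omega> \<in> space (P \<theta> \<Otimes>\<^sub>M P \<theta>).
                  robbins_region (p n) w \<Theta> \<epsilon> (restrict (fst \<omega>) {..<n})
                  \<inter> robbins_region (p n') ws \<Theta> \<epsilon> (restrict (snd \<omega>) {..<n'}) \<noteq> {}}"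
      by blast
  qed
  show ?thesis unfolding seteq
  proof (intro conjI allI impI)
    show "(1 - \<epsilon>)^2 \<le> measure (P \<theta> \<Otimes>\<^sub>M P \<theta>) (E1 \<times> E2)" by (rule ge)
  next
    fix n n' :: nat assume nn: "n \<ge> 1" "n' \<ge> 1"
    show "\<exists>A \<in> sets (P \<theta> \<Otimes>\<^sub>M P \<theta>).
           A \<subseteq> {\<omega> \<in> space (P \<theta> \<Otimes>\<^sub>M P \<theta>).
                  robbins_region (p n) w \<Theta> \<epsilon> (restrict (fst \<omega>) {..<n})
                  \<inter> robbins_region (p n') ws \<Theta> \<epsilon> (restrict (snd \<omega>) {..<n'}) \<noteq> {}}
           \<and> (1 - \<epsilon>)^2 \<le> measure (P \<theta> \<Otimes>\<^sub>M P \<theta>) A"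
      by (rule bexI[OF _ Es], rule conjI[OF sub[OF nn] ge])
  qed
qed

end
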